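(* Let $r$ and $k$ be positive integers with $r+k\equiv 0\pmod 2$ and $k\le r$, let $H$ be the complete graph with $V(H)=[r+k]$, and let $\mathbf{E}=(E_0,E_1,E_2)$ be an ordered partition of $E(H)$. If $|E_1|+2|E_2|<2(r+k-1)$, then $H$ contains a perfect matching which is also a good matching for $\mathbf{E}$.
   Context: $[m]=\{1,\dots,m\}$. An ordered partition $(E_0,E_1,E_2)$ of a set $X$ is a triple of pairwise disjoint (possibly empty) sets with union $X$. A matching $M$ of $H$ is a good matching for $\mathbf{E}=(E_0,E_1,E_2)$ if $M\cap E_2=\emptyset$ and $|M\cap E_1|\le 1$. *)

theory Defs
  imports Main
begin

definition complete_edges :: "'a set \<Rightarrow> 'a set set" where
  "complete_edges V = {e. e \<subseteq> V \<and> card e = 2}"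

definition is_matching :: "'a set set \<Rightarrow> 'a set set \<Rightarrow> bool" where
  "is_matching E M \<longleftrightarrow> M \<subseteq> E \<and> (\<forall>e\<in>M. \<forall>f\<in>M. e \<noteq> f \<longrightarrow> e \<inter> f = {})"

definition is_perfect_matching :: "'a set \<Rightarrow> 'a set set \<Rightarrow> 'a set set \<Rightarrow> bool" where
  "is_perfect_matching V E M \<longleftrightarrow> is_matching E M \<and> \<Union>M = V"

definition ordered_partition3 :: "'a set \<Rightarrow> 'a set \<Rightarrow> 'a set \<Rightarrow> 'a set \<Rightarrow> bool" where
  "ordered_partition3 X E0 E1 E2 \<longleftrightarrow>
     E0 \<inter> E1 = {} \<and> E0 \<inter> E2 = {} \<and> E1 \<inter> E2 = {} \<and> E0 \<union> E1 \<union> E2 = X"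

definition good_matching :: "'a set set \<Rightarrow> 'a set set \<Rightarrow> 'a set set \<Rightarrow> 'a set set \<Rightarrow> 'a set set \<Rightarrow> bool" where
  "good_matching E E0 E1 E2 M \<longleftrightarrow> is_matching E M \<and> M \<inter> E2 = {} \<and> card (M \<inter> E1) \<le> 1"

end

theory Submission
  imports Defs "HOL-Number_Theory.Cong"
begin

lemma L1: "(1::nat) \<le> m \<Longrightarrow> \<exists>y. 1 \<le> y \<and> y \<le> m \<and> y mod m = z mod m"
proof (cases "z mod m = 0")
  case True
  assume "1 \<le> m" then show ?thesis using True by (intro exI[of _ m]) auto
next
  case False
  assume "1 \<le> m" then show ?thesis using False
    by (intro exI[of _ "z mod m"]) (auto simp: mod_le_divisor)
qed

lemma L2: "1 \<le> y \<Longrightarrow> y \<le> m \<Longrightarrow> 1 \<le> z \<Longrightarrow> z \<le> (m::nat) \<Longrightarrow> y mod m = z mod m \<Longrightarrow> y = z"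
  by (metis le_neq_implies_less mod_less mod_self not_one_le_zero)

lemma L3: assumes "odd (m::nat)" "(2*y) mod m = (2*z) mod m" shows "y mod m = z mod m"
proof -
  have "coprime 2 m" using assms(1) by simp
  then have "[y = z] (mod m)" using assms(2)
    by (metis cong_def cong_mult_lcancel_nat mult.commute)
  then show ?thesis by (simp add: cong_def)
qed

lemma L4: "((x::nat)+y) mod m = (x+z) mod m \<Longrightarrow> y mod m = z mod m"
  using cong_add_lcancel_nat unfolding cong_def by blast

lemma exists_add: assumes "1 \<le> m" "c < m" shows "\<exists>y. 1 \<le> y \<and> y \<le> m \<and> ((x::nat) + y) mod m = c"
proof -
  obtain y where y: "1 \<le> y" "y \<le> m" "y mod m = (c + m*x - x) mod m" using L1 assms(1) by blast
  have ge: "m*x \<ge> x" using assms(1) by simp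
  have "(x + y) mod m = (x + (c + m*x - x)) mod m" using y(3) by (metis mod_add_right_eq)
  also have "x + (c + m*x - x) = c + m*x" using ge by linarith
  also have "(c + m*x) mod m = c" using assms(2) by simp
  finally show ?thesis using y by blast
qed

lemma exists_double: assumes "odd m" "1 \<le> m" "c < m" shows "\<exists>y. 1 \<le> y \<and> y \<le> m \<and> (2*(y::nat)) mod m = c"
proof -
  define h where "h = (m+1) div 2"
  have h2: "2*h = m+1" using assms(1) unfolding h_def by simp
  obtain y where y: "1 \<le> y" "y \<le> m" "y mod m = (c*h) mod m" using L1 assms(2) by blast
  have "(2*y) mod m = (2*(c*h)) mod m" using y(3) by (metis mod_mult_right_eq)
  also have "2*(c*h) = c + c*m" using h2 by (metis add.commute mult.left_commute mult.right_neutral distrib_left)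
  also have "(c + c*m) mod m = c" using assms(3) by simp
  finally show ?thesis using y by blast
qed

definition cls :: "nat \<Rightarrow> nat set \<Rightarrow> nat" where
  "cls N e = (if N \<in> e then (2*(\<Sum>e - N)) mod (N-1) else (\<Sum>e) mod (N-1))"

lemma cls_N: "y \<noteq> N \<Longrightarrow> cls N {N,y} = (2*y) mod (N-1)"
  by (simp add: cls_def)

lemma cls_N': "y \<noteq> N \<Longrightarrow> cls N {y,N} = (2*y) mod (N-1)"
  by (simp add: cls_def)

lemma cls_nN: "x \<noteq> N \<Longrightarrow> y \<noteq> N \<Longrightarrow> x \<noteq> y \<Longrightarrow> cls N {x,y} = (x+y) mod (N-1)"
  by (simp add: cls_def)

lemma edge_iff: "e \<in> complete_edges V \<longleftrightarrow> (\<exists>x y. e = {x,y} \<and> x \<noteq> y \<and> x \<in> V \<and> y \<in> V)"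
  unfolding complete_edges_def card_2_iff by auto

lemma edge_at: "e \<in> complete_edges V \<Longrightarrow> x \<in> e \<Longrightarrow> \<exists>y. e = {x,y} \<and> y \<noteq> x \<and> y \<in> V"
  unfolding edge_iff by auto

lemma factor_pm:
  assumes ev: "even N" and N2: "N \<ge> 2" and c: "c < N - 1"
  shows "is_perfect_matching {1..N} (complete_edges {1..N}) {e \<in> complete_edges {1..N}. cls N e = c}"
proof -
  define m where "m = N - 1"
  have om: "odd m" using ev N2 unfolding m_def by presburger
  have m1: "1 \<le> m" using N2 unfolding m_def by simp
  have cm: "c < m" using c unfolding m_def by simp
  let ?V = "{1..N}"
  let ?M = "{e \<in> complete_edges ?V. cls N e = c}"
  have inm: "1 \<le> y \<and> y \<le> m" if "y \<in> ?V" "y \<noteq> N" for y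
    using that unfolding m_def by auto
  have disj: "e \<inter> f = {}" if e: "e \<in> ?M" and f: "f \<in> ?M" and ef: "e \<noteq> f" for e f
  proof (rule ccontr)
    assume "e \<inter> f \<noteq> {}"
    then obtain x where x: "x \<in> e" "x \<in> f" by blast
    have eE: "e \<in> complete_edges ?V" and fE: "f \<in> complete_edges ?V"
      and ce: "cls N e = c" and cf: "cls N f = c" using e f by simp_all
    obtain y where y: "e = {x,y}" "y \<noteq> x" "y \<in> ?V" using edge_at[OF eE x(1)] by blast
    obtain z where z: "f = {x,z}" "z \<noteq> x" "z \<in> ?V" using edge_at[OF fE x(2)] by blast
    have xV: "x \<in> ?V" using eE x(1) unfolding complete_edges_def by blast
    have yz: "y \<noteq> z" using y(1) z(1) ef by blast
    show False
    proof (cases "x = N")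
      case True
      have "cls N e = (2*y) mod m" using y True cls_N m_def by simp
      moreover have "cls N f = (2*z) mod m" using z True cls_N m_def by simp
      ultimately have "(2*y) mod m = (2*z) mod m" using ce cf by simp
      then have "y mod m = z mod m" using L3 om by blast
      moreover have "1 \<le> y \<and> y \<le> m" using inm y True by auto
      moreover have "1 \<le> z \<and> z \<le> m" using inm z True by auto
      ultimately have "y = z" using L2 by blast
      then show False using yz by simp
    next
      case xN: False
      show False
      proof (cases "y = N")
        case yN: True
        then have zN: "z \<noteq> N" using yz by auto
        have "cls N e = (2*x) mod m" using y yN xN cls_N' m_def by simp
        moreover have "cls N f = (x+z) mod m" using z zN xN cls_nN m_def by simp
        ultimately have "(x+x) mod m = (x+z) mod m" using ce cf by (simp add: mult_2)
        then have "x mod m = z mod m" using L4 by blast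
        moreover have "1 \<le> x \<and> x \<le> m" using inm xV xN by auto
        moreover have "1 \<le> z \<and> z \<le> m" using inm z zN by auto
        ultimately have "x = z" using L2 by blast
        then show False using z by simp
      next
        case yN: False
        show False
        proof (cases "z = N")
          case zN: True
          have "cls N f = (2*x) mod m" using z zN xN cls_N' m_def by simp
          moreover have "cls N e = (x+y) mod m" using y yN xN cls_nN m_def by simp
          ultimately have "(x+x) mod m = (x+y) mod m" using ce cf by (simp add: mult_2)
          then have "x mod m = y mod m" using L4 by blast
          moreover have "1 \<le> x \<and> x \<le> m" using inm xV xN by auto
          moreover have "1 \<le> y \<and> y \<le> m" using inm y yN by auto
          ultimately have "x = y" using L2 by blast
          then show False using y by simp
        next
          case zN: False
          have "cls N e = (x+y) mod m" using y yN xN cls_nN m_def by simp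
          moreover have "cls N f = (x+z) mod m" using z zN xN cls_nN m_def by simp
          ultimately have "(x+y) mod m = (x+z) mod m" using ce cf by simp
          then have "y mod m = z mod m" using L4 by blast
          moreover have "1 \<le> y \<and> y \<le> m" using inm y yN by auto
          moreover have "1 \<le> z \<and> z \<le> m" using inm z zN by auto
          ultimately have "y = z" using L2 by blast
          then show False using yz by simp
        qed
      qed
    qed
  qed
  have cover: "x \<in> \<Union>?M" if xV: "x \<in> ?V" for x
  proof (cases "x = N")
    case True
    obtain a where a: "1 \<le> a" "a \<le> m" "(2*a) mod m = c" using exists_double om m1 cm by blast
    have aN: "a \<noteq> N" "a \<in> ?V" using a unfolding m_def by auto
    have "{N,a} \<in> complete_edges ?V" unfolding edge_iff using aN N2
      by (intro exI[of _ N] exI[of _ a]) auto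
    moreover have "cls N {N,a} = c" using cls_N[of a N] aN a(3) m_def by simp
    ultimately have "{N,a} \<in> ?M" by simp
    then show ?thesis using True by blast
  next
    case xN: False
    obtain y where y: "1 \<le> y" "y \<le> m" "(x + y) mod m = c" using exists_add m1 cm by blast
    have yN: "y \<noteq> N" "y \<in> ?V" using y unfolding m_def by auto
    show ?thesis
    proof (cases "y = x")
      case True
      have "(2*x) mod m = c" using y(3) True by (simp add: mult_2)
      moreover have "{x,N} \<in> complete_edges ?V" unfolding edge_iff using xN xV N2
        by (intro exI[of _ x] exI[of _ N]) auto
      moreover have "cls N {x,N} = (2*x) mod m" using cls_N'[of x N] xN m_def by simp
      ultimately have "{x,N} \<in> ?M" by simp
      then show ?thesis by blast
    next
      case False
      have "{x,y} \<in> complete_edges ?V" unfolding edge_iff using yN xV False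
        by (intro exI[of _ x] exI[of _ y]) auto
      moreover have "cls N {x,y} = c" using cls_nN[of x N y] xN yN False y(3) m_def by simp
      ultimately have "{x,y} \<in> ?M" by simp
      then show ?thesis by blast
    qed
  qed
  have sub: "\<Union>?M \<subseteq> ?V"
  proof
    fix x assume "x \<in> \<Union>?M"
    then obtain e where "e \<in> complete_edges ?V" "x \<in> e" by blast
    then show "x \<in> ?V" unfolding complete_edges_def by blast
  qed
  have "\<Union>?M = ?V" using sub cover by blast
  moreover have "?M \<subseteq> complete_edges ?V" by blast
  moreover have "\<forall>e\<in>?M. \<forall>f\<in>?M. e \<noteq> f \<longrightarrow> e \<inter> f = {}"
    by (intro ballI impI disj)
  ultimately show ?thesis unfolding is_perfect_matching_def is_matching_def
    by (intro conjI) (assumption+)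
qed

lemma card_sum_le:
  fixes E :: "nat set set" and A :: "nat \<Rightarrow> nat set set"
  assumes fin: "finite E" and disj: "\<And>i j. i \<noteq> j \<Longrightarrow> A i \<inter> A j = {}"
  shows "(\<Sum>c<m. card (A c \<inter> E)) \<le> card E"
proof -
  have "(\<Sum>c<m. card (A c \<inter> E)) = card (\<Union>c<m. A c \<inter> E)"
    by (rule card_UN_disjoint[symmetric]) (use fin disj in auto)
  also have "\<dots> \<le> card E" by (rule card_mono[OF fin]) auto
  finally show ?thesis .
qed

theorem lemma11:
  fixes r k :: nat and E0 E1 E2 :: "nat set set"
  assumes "r > 0" and "k > 0" and "even (r + k)" and "k \<le> r"
    and "ordered_partition3 (complete_edges {1..r+k}) E0 E1 E2"
    and "card E1 + 2 * card E2 < 2 * (r + k - 1)"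
  shows "\<exists>M. is_perfect_matching {1..r+k} (complete_edges {1..r+k}) M
             \<and> good_matching (complete_edges {1..r+k}) E0 E1 E2 M"
proof -
  define N where "N = r + k"
  define m where "m = N - 1"
  define A where "A c = {e \<in> complete_edges {1..N}. cls N e = c}" for c
  have ev: "even N" and N2: "N \<ge> 2" using assms(1-3) unfolding N_def by auto
  have finE: "finite (complete_edges {1..N})"
    by (rule finite_subset[of _ "Pow {1..N}"]) (auto simp: complete_edges_def)
  have sub1: "E1 \<subseteq> complete_edges {1..N}" and sub2: "E2 \<subseteq> complete_edges {1..N}"
    using assms(5) unfolding ordered_partition3_def N_def by auto
  have f1: "finite E1" and f2: "finite E2" using finE sub1 sub2 finite_subset by auto
  have dA: "A i \<inter> A j = {}" if "i \<noteq> j" for i j using that unfolding A_def by auto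
  have s1: "(\<Sum>c<m. card (A c \<inter> E1)) \<le> card E1" by (rule card_sum_le[OF f1 dA])
  have s2: "(\<Sum>c<m. card (A c \<inter> E2)) \<le> card E2" by (rule card_sum_le[OF f2 dA])
  have "(\<Sum>c<m. card (A c \<inter> E1) + 2 * card (A c \<inter> E2)) =
        (\<Sum>c<m. card (A c \<inter> E1)) + 2 * (\<Sum>c<m. card (A c \<inter> E2))"
    by (simp add: sum.distrib sum_distrib_left)
  also have "\<dots> < 2 * m" using s1 s2 assms(6) unfolding m_def N_def by linarith
  finally have lt: "(\<Sum>c<m. card (A c \<inter> E1) + 2 * card (A c \<inter> E2)) < 2 * m" .
  obtain c where c: "c < m" "card (A c \<inter> E1) + 2 * card (A c \<inter> E2) < 2"
  proof (rule ccontr)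
    assume "\<not> thesis"
    then have "\<forall>c<m. 2 \<le> card (A c \<inter> E1) + 2 * card (A c \<inter> E2)" using that by force
    then have "(\<Sum>c<m. (2::nat)) \<le> (\<Sum>c<m. card (A c \<inter> E1) + 2 * card (A c \<inter> E2))"
      by (intro sum_mono) auto
    then show False using lt by simp
  qed
  have pm: "is_perfect_matching {1..N} (complete_edges {1..N}) (A c)"
    unfolding A_def by (rule factor_pm[OF ev N2]) (use c(1) m_def in simp)
  have "card (A c \<inter> E2) = 0" using c(2) by simp
  then have e2: "A c \<inter> E2 = {}" using f2 by simp
  have e1: "card (A c \<inter> E1) \<le> 1" using c(2) by simp
  have "good_matching (complete_edges {1..N}) E0 E1 E2 (A c)"
    using pm e1 e2 unfolding good_matching_def is_perfect_matching_def by blast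
  then show ?thesis using pm unfolding N_def by blast
qed

end
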